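(* For the representation of a symmetric subgroup $T_m(\mathbb{C})\le G\le\mathrm{GL}_m(\mathbb{C})$ on $\mathbb{C}^{m\times n}\otimes\mathbb{C}^{n\times m}$ given by $X\cdot(A\otimes B)=XA\otimes BX^{-1}$, the weight norm equals $N_l=\sqrt2$ and the weight margin satisfies $\gamma_l\ge m^{-3/2}$.
   Context: $T_m(\mathbb{C})$: invertible diagonal matrices; symmetric: Zariski closed and closed under conjugate transposition. For a rational representation $\pi$ of $G$ with weight set $\Omega(\pi)\subset\mathbb{Z}^m$ (the characters $\omega$ such that $\mathrm{diag}(t)$ acts on a weight vector by $t_1^{\omega_1}\cdots t_m^{\omega_m}$), the weight norm is $N(\pi)=\max_{\omega\in\Omega(\pi)}\|\omega\|_2$ and the weight margin is $\gamma(\pi)=\min\{\mathrm{dist}(0,\mathrm{conv}(S)):S\subseteq\Omega(\pi),\ 0\notin\mathrm{conv}(S)\}$, where $\mathrm{dist}(0,\mathrm{conv}(S))$ is the Euclidean distance from the origin to the convex hull. *)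

theory Defs
  imports "HOL-Analysis.Analysis"
begin

definition diag_mat :: "complex^'m \<Rightarrow> complex^'m^'m" where
  "diag_mat t = (\<chi> i j. if i = j then t $ i else 0)"

text \<open>Elements of C^(m x n) (x) C^(n x m), in the standard basis E_ik (x) E_lj,
  as arrays T i k l j.  Action of X in GL_m extended linearly from
  X.(A (x) B) = XA (x) B X^{-1}.\<close>
type_synonym ('m, 'n) tens = "'m \<Rightarrow> 'n \<Rightarrow> 'n \<Rightarrow> 'm \<Rightarrow> complex"

definition tens_act :: "complex^'m^'m \<Rightarrow> ('m::finite, 'n) tens \<Rightarrow> ('m, 'n) tens" where
  "tens_act X T = (\<lambda>i k l j. \<Sum>i'\<in>UNIV. \<Sum>j'\<in>UNIV.
       X $ i $ i' * T i' k l j' * (matrix_inv X) $ j' $ j)"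

definition weights :: "('m::finite, 'n::finite) tens itself \<Rightarrow> (int^'m) set" where
  "weights _ = {\<omega>. \<exists>T :: ('m, 'n) tens. T \<noteq> (\<lambda>i k l j. 0) \<and>
      (\<forall>t :: complex^'m. (\<forall>i. t $ i \<noteq> 0) \<longrightarrow>
         tens_act (diag_mat t) T = (\<lambda>i k l j. (\<Prod>a\<in>UNIV. t $ a powi (\<omega> $ a)) * T i k l j))}"

definition real_of_weight :: "int^'m \<Rightarrow> real^'m" where
  "real_of_weight \<omega> = (\<chi> i. real_of_int (\<omega> $ i))"

definition weight_norm :: "('m::finite, 'n::finite) tens itself \<Rightarrow> real" where
  "weight_norm x = Max ((\<lambda>\<omega>. norm (real_of_weight \<omega>)) ` weights x)"

definition weight_margin :: "('m::finite, 'n::finite) tens itself \<Rightarrow> real" where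
  "weight_margin x = Min {infdist 0 (convex hull (real_of_weight ` S)) | S.
      S \<subseteq> weights x \<and> S \<noteq> {} \<and> 0 \<notin> convex hull (real_of_weight ` S)}"

end

theory Submission
  imports Defs
begin

lemma matrix_inv_eqI:
  fixes A B :: "'a::comm_ring_1^'n^'n"
  assumes "A ** B = mat 1" "B ** A = mat 1"
  shows "matrix_inv A = B"
proof -
  have "\<exists>C. A ** C = mat 1 \<and> C ** A = mat 1" using assms by blast
  then have C: "A ** matrix_inv A = mat 1" "matrix_inv A ** A = mat 1"
    unfolding matrix_inv_def by (metis (mono_tags, lifting) someI_ex)+
  have "matrix_inv A = matrix_inv A ** (A ** B)" using assms by simp
  also have "\<dots> = (matrix_inv A ** A) ** B" by (simp add: matrix_mul_assoc)
  also have "\<dots> = B" using C by simp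
  finally show ?thesis .
qed

lemma diag_inv:
  assumes "\<forall>i. t $ i \<noteq> 0"
  shows "matrix_inv (diag_mat t) = diag_mat (\<chi> i. inverse (t $ i))"
proof (rule matrix_inv_eqI)
  show "diag_mat t ** diag_mat (\<chi> i. inverse (t $ i)) = mat 1"
    using assms by (simp add: diag_mat_def matrix_matrix_mult_def mat_def vec_eq_iff
      if_distrib[of "\<lambda>x. x * _"] sum.delta cong: if_cong)
  show "diag_mat (\<chi> i. inverse (t $ i)) ** diag_mat t = mat 1"
    using assms by (simp add: diag_mat_def matrix_matrix_mult_def mat_def vec_eq_iff
      if_distrib[of "\<lambda>x. x * _"] sum.delta cong: if_cong)
qed

lemma act_diag:
  assumes "\<forall>i. t $ i \<noteq> 0"
  shows "tens_act (diag_mat t) T = (\<lambda>i k l j. t $ i * T i k l j * inverse (t $ j))"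
  unfolding tens_act_def diag_inv[OF assms]
  by (simp add: diag_mat_def if_distrib[of "\<lambda>x. x * _"] if_distrib[of "\<lambda>x. _ * x"] sum.delta sum.delta' cong: if_cong)

definition E :: "'m::finite \<Rightarrow> 'm \<Rightarrow> int^'m" where
  "E i j = (\<chi> a. (if a = i then 1 else 0) - (if a = j then 1 else 0))"

lemma prod_E:
  fixes t :: "complex^'m::finite"
  assumes "\<forall>i. t $ i \<noteq> 0"
  shows "(\<Prod>a\<in>UNIV. t $ a powi (E i j $ a)) = t $ i * inverse (t $ j)"
proof (cases "i = j")
  case True then show ?thesis using assms by (simp add: E_def right_inverse)
next
  case False
  have "(\<Prod>a\<in>UNIV. t $ a powi (E i j $ a)) = (\<Prod>a\<in>UNIV. (if a = i then t $ i else 1) * (if a = j then inverse (t $ j) else 1))"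
    using False by (intro prod.cong) (auto simp: E_def power_int_minus)
  also have "\<dots> = t $ i * inverse (t $ j)" by (simp add: prod.distrib prod.delta)
  finally show ?thesis .
qed

lemma E_in_weights: "E i j \<in> weights TYPE(('m::finite, 'n::finite) tens)"
proof -
  define T :: "('m, 'n) tens" where "T = (\<lambda>i' k l j'. if i' = i \<and> j' = j then 1 else 0)"
  have "T \<noteq> (\<lambda>i k l j. 0)"
  proof
    assume eq: "T = (\<lambda>i k l j. 0)"
    obtain k0 :: 'n where True by blast
    have "T i k0 k0 j = 0" using eq by simp
    then show False by (simp add: T_def)
  qed
  moreover have "tens_act (diag_mat t) T = (\<lambda>i' k l j'. (\<Prod>a\<in>UNIV. t $ a powi (E i j $ a)) * T i' k l j')"
    if tnz: "\<forall>i. t $ i \<noteq> 0" for t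
    unfolding act_diag[OF tnz] prod_E[OF tnz] by (simp add: T_def fun_eq_iff)
  ultimately show ?thesis unfolding weights_def by blast
qed

lemma weights_sub: "weights TYPE(('m::finite, 'n::finite) tens) \<subseteq> range (\<lambda>(i,j). E i j)"
proof
  fix \<omega> assume "\<omega> \<in> weights TYPE(('m, 'n) tens)"
  then obtain T :: "('m,'n) tens" where T0: "T \<noteq> (\<lambda>i k l j. 0)" and
    H: "\<And>t :: complex^'m. (\<forall>i. t $ i \<noteq> 0) \<Longrightarrow>
         tens_act (diag_mat t) T = (\<lambda>i k l j. (\<Prod>a\<in>UNIV. t $ a powi (\<omega> $ a)) * T i k l j)"
    unfolding weights_def by blast
  obtain i k l j where nz: "T i k l j \<noteq> 0" using T0 by (metis ext)
  have eq: "t $ i * inverse (t $ j) = (\<Prod>a\<in>UNIV. t $ a powi (\<omega> $ a))" if "\<forall>i. t $ i \<noteq> 0" for t :: "complex^'m"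
  proof -
    have "t $ i * T i k l j * inverse (t $ j) = (\<Prod>a\<in>UNIV. t $ a powi (\<omega> $ a)) * T i k l j"
      using H[OF that] act_diag[OF that, of T] by metis
    then have "(t $ i * inverse (t $ j)) * T i k l j = (\<Prod>a\<in>UNIV. t $ a powi (\<omega> $ a)) * T i k l j"
      by (simp only: ac_simps)
    then show ?thesis using nz mult_right_cancel by blast
  qed
  have "\<omega> $ b = E i j $ b" for b
  proof -
    define t :: "complex^'m" where "t = (\<chi> a. if a = b then 2 else 1)"
    have tnz: "\<forall>i. t $ i \<noteq> 0" by (simp add: t_def)
    have "(\<Prod>a\<in>UNIV. t $ a powi (\<omega> $ a)) = 2 powi (\<omega> $ b)"
      by (simp add: t_def if_distrib[of "\<lambda>x. x powi _"] prod.delta cong: if_cong)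
    moreover have "t $ i * inverse (t $ j) = 2 powi (E i j $ b)"
      by (simp add: t_def E_def power_int_minus)
    ultimately have "(2::complex) powi (\<omega> $ b) = 2 powi (E i j $ b)" using eq[OF tnz] by simp
    then have "(of_real ((2::real) powi (\<omega> $ b)) :: complex) = of_real (2 powi (E i j $ b))"
      by simp
    then have e2: "(2::real) powi (\<omega> $ b) = 2 powi (E i j $ b)" by (simp only: of_real_eq_iff)
    show ?thesis
    proof (rule linorder_cases[of "\<omega> $ b" "E i j $ b"])
      assume "\<omega> $ b < E i j $ b"
      then have "(2::real) powi (\<omega> $ b) < 2 powi (E i j $ b)" by (rule power_int_strict_increasing) simp
      then show ?thesis using e2 by simp
    next
      assume "\<omega> $ b > E i j $ b"
      then have "(2::real) powi (E i j $ b) < 2 powi (\<omega> $ b)" by (rule power_int_strict_increasing) simp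
      then show ?thesis using e2 by simp
    qed
  qed
  then have "\<omega> = E i j" by (simp add: vec_eq_iff)
  then show "\<omega> \<in> range (\<lambda>(i,j). E i j)" by auto
qed


lemma rw_E: "real_of_weight (E i j) = (\<chi> a. (if a = i then 1 else 0) - (if a = j then 1 else 0))"
  by (simp add: real_of_weight_def E_def vec_eq_iff)

lemma inner_E: "inner y (real_of_weight (E i j)) = y $ i - y $ j"
  unfolding rw_E inner_vec_def
  by (simp add: right_diff_distrib sum_subtractf if_distrib[of "\<lambda>x. _ * x"] sum.delta cong: if_cong)

lemma norm_E: "norm (real_of_weight (E i j)) = (if i = j then 0 else sqrt 2)"
proof -
  have "(norm (real_of_weight (E i j)))\<^sup>2 = (if i = j then 0 else 2)"
    unfolding power2_norm_eq_inner inner_E by (simp add: rw_E)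
  then show ?thesis by (metis norm_ge_zero real_sqrt_abs real_sqrt_zero abs_of_nonneg)
qed

lemma margin_bound:
  fixes S :: "(int^'m::finite) set"
  assumes sub: "S \<subseteq> range (\<lambda>(i,j). E i j)" and fin: "finite S" and ne: "S \<noteq> {}"
    and n0: "0 \<notin> convex hull (real_of_weight ` S)"
  shows "1 / real CARD('m) powr (3/2) \<le> infdist 0 (convex hull (real_of_weight ` S))"
proof -
  define C where "C = convex hull (real_of_weight ` S)"
  define m where "m = real CARD('m)"
  define M where "M = m powr (3/2)"
  have mpos: "m > 0" unfolding m_def by simp
  have Mpos: "M > 0" unfolding M_def using mpos by simp
  have M2: "M\<^sup>2 = m ^ 3"
  proof -
    have "M\<^sup>2 = M powr 2" using powr_realpow[OF Mpos, of 2] by simp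
    also have "\<dots> = m powr 3" unfolding M_def powr_powr by simp
    also have "\<dots> = m ^ 3" using powr_realpow[OF mpos, of 3] by simp
    finally show ?thesis .
  qed
  have "compact C" unfolding C_def by (intro finite_imp_compact_convex_hull) (use fin in auto)
  then have "closed C" by (rule compact_imp_closed)
  obtain y :: "real^'m" and b where b: "0 < b" and yb: "\<And>x. x \<in> C \<Longrightarrow> inner y x > b"
    using separating_hyperplane_closed_0[OF _ \<open>closed C\<close>] n0 unfolding C_def
    by (metis convex_convex_hull)
  define r :: "real^'m" where "r = (\<chi> a. real (card {k. y $ k < y $ a}))"
  have "r $ i - r $ j \<ge> 1" if "y $ i > y $ j" for i j
  proof -
    have "{k. y $ k < y $ j} < {k. y $ k < y $ i}" using that by auto
    then have "card {k. y $ k < y $ j} < card {k. y $ k < y $ i}" by (intro psubset_card_mono) auto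
    then show ?thesis unfolding r_def by simp
  qed
  then have H: "inner r x \<ge> 1" if xS: "x \<in> real_of_weight ` S" for x
  proof -
    from xS obtain w where w: "w \<in> S" "x = real_of_weight w" by blast
    have "w \<in> range (\<lambda>(i,j). E i j)" using w(1) sub by blast
    then obtain p where "w = (\<lambda>(i,j). E i j) p" by blast
    then obtain i j where wE: "w = E i j" by (cases p) simp
    have "x \<in> C" unfolding C_def using xS by (rule hull_inc)
    then have "inner y x > b" by (rule yb)
    then have "y $ i > y $ j" using b unfolding w(2) wE inner_E by simp
    then have "r $ i - r $ j \<ge> 1" by (rule \<open>\<And>i j. y $ i > y $ j \<Longrightarrow> r $ i - r $ j \<ge> 1\<close>)
    then show ?thesis unfolding w(2) wE inner_E .
  qed
  have Csub: "C \<subseteq> {x. inner r x \<ge> 1}" unfolding C_def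
  proof (rule hull_minimal)
    show "real_of_weight ` S \<subseteq> {x. 1 \<le> inner r x}" using H by blast
    show "convex {x. 1 \<le> inner r x}" by (rule convex_halfspace_ge)
  qed
  have rle: "0 \<le> r $ a \<and> r $ a \<le> m" for a
  proof -
    have "card {k. y $ k < y $ a} \<le> CARD('m)" by (rule card_mono) simp_all
    then show ?thesis unfolding r_def m_def by simp
  qed
  have "inner r r \<le> m ^ 3"
  proof -
    have "inner r r = (\<Sum>a\<in>UNIV. r $ a * r $ a)" by (simp add: inner_vec_def)
    also have "\<dots> \<le> (\<Sum>a\<in>(UNIV::'m set). m * m)"
    proof (rule sum_mono)
      fix a :: 'm
      show "r $ a * r $ a \<le> m * m" using rle[of a] by (intro mult_mono) simp_all
    qed
    also have "\<dots> = m ^ 3" unfolding m_def by (simp add: power3_eq_cube)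
    finally show ?thesis .
  qed
  then have "(norm r)\<^sup>2 \<le> M\<^sup>2" unfolding power2_norm_eq_inner M2 .
  then have nr: "norm r \<le> M" by (rule power2_le_imp_le) (use Mpos in simp)
  have lb: "1 / M \<le> dist 0 p" if pC: "p \<in> C" for p
  proof -
    have "1 \<le> inner r p" using Csub pC by blast
    also have "\<dots> \<le> norm r * norm p" by (rule norm_cauchy_schwarz)
    also have "\<dots> \<le> M * norm p" using nr by (rule mult_right_mono) simp
    finally have "1 \<le> norm p * M" by (simp only: mult.commute)
    then show ?thesis using Mpos by (simp add: divide_le_eq)
  qed
  have "C \<noteq> {}" unfolding C_def using ne by simp
  then have "1 / M \<le> infdist 0 C"
    unfolding infdist_notempty[OF \<open>C \<noteq> {}\<close>] using lb by (intro cINF_greatest) simp_all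
  then show ?thesis unfolding M_def m_def C_def .
qed

theorem mainTheorem12:
  assumes "CARD('m::finite) \<ge> 2"
  shows "weight_norm TYPE(('m, 'n::finite) tens) = sqrt 2
       \<and> weight_margin TYPE(('m, 'n) tens) \<ge> 1 / real CARD('m) powr (3/2)"
proof -
  define W where "W = weights TYPE(('m, 'n) tens)"
  have Wsub: "W \<subseteq> range (\<lambda>(i,j). E i j)" unfolding W_def by (rule weights_sub)
  have finW: "finite W" by (rule finite_subset[OF Wsub]) auto
  obtain i0 j0 :: 'm where ij: "i0 \<noteq> j0"
  proof -
    obtain a :: 'm where True by blast
    have "UNIV \<noteq> {a}"
    proof
      assume "UNIV = {a}"
      then have "card (UNIV::'m set) = card {a}" by (rule arg_cong)
      then have "CARD('m) = 1" by simp
      then show False using assms by simp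
    qed
    then obtain b where "b \<noteq> a" by blast
    then show ?thesis using that by blast
  qed
  have Ein: "E i j \<in> W" for i j unfolding W_def by (rule E_in_weights)
  have "weight_norm TYPE(('m, 'n) tens) = sqrt 2"
    unfolding weight_norm_def W_def[symmetric]
  proof (rule Max_eqI)
    show "finite ((\<lambda>\<omega>. norm (real_of_weight \<omega>)) ` W)" using finW by simp
    show "y \<le> sqrt 2" if yin: "y \<in> (\<lambda>\<omega>. norm (real_of_weight \<omega>)) ` W" for y
    proof -
      obtain w where w: "w \<in> W" "y = norm (real_of_weight w)" using yin by blast
      have "w \<in> range (\<lambda>(i,j). E i j)" using w(1) Wsub by blast
      then obtain p where "w = (\<lambda>(i,j). E i j) p" by blast
      then obtain i j where "w = E i j" by (cases p) simp
      then show ?thesis using w(2) by (simp add: norm_E)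
    qed
    show "sqrt 2 \<in> (\<lambda>\<omega>. norm (real_of_weight \<omega>)) ` W"
    proof
      show "sqrt 2 = norm (real_of_weight (E i0 j0))" using ij by (simp add: norm_E)
    qed (rule Ein)
  qed
  moreover have "weight_margin TYPE(('m, 'n) tens) \<ge> 1 / real CARD('m) powr (3/2)"
  proof -
    define X where "X = {infdist 0 (convex hull (real_of_weight ` S)) | S.
      S \<subseteq> W \<and> S \<noteq> {} \<and> 0 \<notin> convex hull (real_of_weight ` S)}"
    have "X \<subseteq> (\<lambda>S. infdist 0 (convex hull (real_of_weight ` S))) ` Pow W" unfolding X_def by blast
    then have finX: "finite X" using finW by (meson finite_Pow_iff finite_imageI finite_subset)
    have "real_of_weight (E i0 j0) \<noteq> 0"
      using norm_E[of i0 j0] ij by auto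
    then have "0 \<notin> convex hull (real_of_weight ` {E i0 j0})" by simp
    then have "infdist 0 (convex hull (real_of_weight ` {E i0 j0})) \<in> X"
      unfolding X_def using Ein[of i0 j0] by blast
    then have "X \<noteq> {}" by auto
    then have "Min X \<in> X" using finX by simp
    then obtain S where S: "Min X = infdist 0 (convex hull (real_of_weight ` S))"
      "S \<subseteq> W" "S \<noteq> {}" "0 \<notin> convex hull (real_of_weight ` S)" unfolding X_def by blast
    have "1 / real CARD('m) powr (3/2) \<le> Min X" unfolding S(1)
    proof (rule margin_bound)
      show "S \<subseteq> range (\<lambda>(i,j). E i j)" using S(2) Wsub by (rule order_trans)
      show "finite S" using S(2) finW by (rule finite_subset)
    qed (use S in auto)
    then show ?thesis unfolding weight_margin_def W_def[symmetric] X_def[symmetric] .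
  qed
  ultimately show ?thesis by blast
qed

end
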